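(* Let $\Sigma\in\mathbb{M}(M,\mathbb{C})\otimes\mathbb{M}(N,\mathbb{C})$ be positive semidefinite and separable, and let $\{P_j\}_{j=1}^u$ be a resolution of identity in $\mathcal{C}_\Sigma$ consisting of minimal projections in $\mathcal{C}_\Sigma$. Then there exist $s\in\mathbb{N}$ and positive semidefinite matrices $R_1,\dots,R_s\in\mathbb{M}(M,\mathbb{C})$, $T_1,\dots,T_s\in\mathbb{M}(N,\mathbb{C})$ such that $\Sigma=\sum_{i=1}^s R_i\otimes T_i$ and $T_iP_j=P_jT_i$ for all $i\in\{1,\dots,s\}$ and $j\in\{1,\dots,u\}$.
   Context: We identify $\mathbb{M}(M,\mathbb{C})\otimes\mathbb{M}(N,\mathbb{C})$ with $\mathbb{M}(MN,\mathbb{C})$ via the Kronecker product, $(A\otimes B)_{(i,j),(l,m)}=A_{il}B_{jm}$. A positive semidefinite $\Sigma\in\mathbb{M}(M,\mathbb{C})\otimes\mathbb{M}(N,\mathbb{C})$ is called separable if it can be written as $\Sigma=\sum_{i=1}^n \tilde R_i\otimes\tilde T_i$ with all $\tilde R_i\in\mathbb{M}(M,\mathbb{C})$ and $\tilde T_i\in\mathbb{M}(N,\mathbb{C})$ positive semidefinite. The right commutant is $\mathcal{C}_\Sigma:=\{A\in\mathbb{M}(N,\mathbb{C}) : (\mathbf{1}_M\otimes A)\Sigma=\Sigma(\mathbf{1}_M\otimes A)\}$, a unital $*$-subalgebra of $\mathbb{M}(N,\mathbb{C})$. A projection means an orthogonal projection. A nonzero projection $P\in\mathcal{A}$ is minimal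 in a $*$-algebra $\mathcal{A}$ if every projection $Q\in\mathcal{A}$ with $Q\le P$ satisfies $Q=0$ or $Q=P$. A resolution of identity in $\mathcal{A}$ is a finite family of mutually orthogonal projections $P_i\in\mathcal{A}$ with $\sum_i P_i=\mathbf{1}_N$. *)

theory Defs
  imports "Jordan_Normal_Form.Matrix" "HOL-Library.Complex_Order"
begin

definition hermitian_mat :: "complex mat \<Rightarrow> bool" where
  "hermitian_mat A \<longleftrightarrow> dim_row A = dim_col A \<and>
     (\<forall>i < dim_row A. \<forall>j < dim_col A. A $$ (i, j) = cnj (A $$ (j, i)))"

text \<open>Positive semidefinite of size n: Hermitian n x n and v^* A v \<ge> 0 for every v in C^n
  (order on complex from Complex_Order: real and nonnegative).\<close>
definition psd_mat :: "nat \<Rightarrow> complex mat \<Rightarrow> bool" where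
  "psd_mat n A \<longleftrightarrow> A \<in> carrier_mat n n \<and> hermitian_mat A \<and>
     (\<forall>v :: nat \<Rightarrow> complex. 0 \<le> (\<Sum>i<n. \<Sum>j<n. cnj (v i) * A $$ (i, j) * v j))"

text \<open>Kronecker product, (A \<otimes> B)_{(i,j),(l,m)} = A_{il} B_{jm}, with the pair (i,j)
  identified with the index i * N + j (N = size of B).\<close>
definition kron_mat :: "complex mat \<Rightarrow> complex mat \<Rightarrow> complex mat" where
  "kron_mat A B = mat (dim_row A * dim_row B) (dim_col A * dim_col B)
     (\<lambda>(r, c). A $$ (r div dim_row B, c div dim_col B) * B $$ (r mod dim_row B, c mod dim_col B))"

definition msum :: "nat \<Rightarrow> (nat \<Rightarrow> complex mat) \<Rightarrow> nat set \<Rightarrow> complex mat" where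
  "msum n f I = mat n n (\<lambda>(r, c). \<Sum>i\<in>I. f i $$ (r, c))"

definition separable :: "nat \<Rightarrow> nat \<Rightarrow> complex mat \<Rightarrow> bool" where
  "separable M N \<Sigma> \<longleftrightarrow> (\<exists>n :: nat. \<exists>R T :: nat \<Rightarrow> complex mat.
     (\<forall>i<n. psd_mat M (R i) \<and> psd_mat N (T i)) \<and>
     \<Sigma> = msum (M * N) (\<lambda>i. kron_mat (R i) (T i)) {..<n})"

definition right_commutant :: "nat \<Rightarrow> nat \<Rightarrow> complex mat \<Rightarrow> complex mat set" where
  "right_commutant M N \<Sigma> = {A \<in> carrier_mat N N.
     kron_mat (1\<^sub>m M) A * \<Sigma> = \<Sigma> * kron_mat (1\<^sub>m M) A}"

definition proj_mat :: "nat \<Rightarrow> complex mat \<Rightarrow> bool" where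
  "proj_mat N P \<longleftrightarrow> P \<in> carrier_mat N N \<and> P * P = P \<and> hermitian_mat P"

text \<open>For projections, Q \<le> P means Q P = Q (equivalently P - Q is psd).\<close>
definition proj_le :: "complex mat \<Rightarrow> complex mat \<Rightarrow> bool" where
  "proj_le Q P \<longleftrightarrow> Q * P = Q"

definition minimal_proj_in :: "nat \<Rightarrow> complex mat set \<Rightarrow> complex mat \<Rightarrow> bool" where
  "minimal_proj_in N \<A> P \<longleftrightarrow> P \<in> \<A> \<and> proj_mat N P \<and> P \<noteq> 0\<^sub>m N N \<and>
     (\<forall>Q \<in> \<A>. proj_mat N Q \<and> proj_le Q P \<longrightarrow> Q = 0\<^sub>m N N \<or> Q = P)"

end

theory Submission
  imports Defs
begin


lemma sum_div_mod:
  fixes g :: "nat \<Rightarrow> nat \<Rightarrow> 'a::comm_monoid_add"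
  shows "(\<Sum>x<k*l. g (x div l) (x mod l)) = (\<Sum>a<k. \<Sum>b<l. g a b)"
proof (induction k)
  case 0 then show ?case by simp
next
  case (Suc k)
  have split: "{..<Suc k * l} = {..<k*l} \<union> {k*l..<k*l+l}" by auto
  have "(\<Sum>x\<in>{k*l..<k*l+l}. g (x div l) (x mod l)) = (\<Sum>b<l. g k b)"
  proof -
    have "(\<Sum>x\<in>{k*l..<k*l+l}. g (x div l) (x mod l)) = (\<Sum>b<l. g ((k*l+b) div l) ((k*l+b) mod l))"
      by (rule sum.reindex_bij_witness[of _ "\<lambda>b. k*l+b" "\<lambda>x. x - k*l"]) auto
    also have "\<dots> = (\<Sum>b<l. g k b)"
      by (rule sum.cong) auto
    finally show ?thesis .
  qed
  moreover have "(\<Sum>x<Suc k*l. g (x div l) (x mod l)) =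
     (\<Sum>x<k*l. g (x div l) (x mod l)) + (\<Sum>x\<in>{k*l..<k*l+l}. g (x div l) (x mod l))"
    unfolding split by (rule sum.union_disjoint) auto
  ultimately show ?case using Suc by simp
qed

lemma mult_index:
  "A \<in> carrier_mat m k \<Longrightarrow> B \<in> carrier_mat k p \<Longrightarrow> i < m \<Longrightarrow> j < p \<Longrightarrow>
   (A * B) $$ (i, j) = (\<Sum>x<k. A $$ (i, x) * B $$ (x, j))"
  by (auto simp: scalar_prod_def atLeast0LessThan intro!: sum.cong)

lemma kron_carrier:
  "A \<in> carrier_mat m k \<Longrightarrow> B \<in> carrier_mat n l \<Longrightarrow> kron_mat A B \<in> carrier_mat (m*n) (k*l)"
  by (simp add: kron_mat_def)

lemma kron_index:
  "A \<in> carrier_mat m k \<Longrightarrow> B \<in> carrier_mat n l \<Longrightarrow> r < m*n \<Longrightarrow> c < k*l \<Longrightarrow>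
   kron_mat A B $$ (r, c) = A $$ (r div n, c div l) * B $$ (r mod n, c mod l)"
  by (simp add: kron_mat_def)

lemma msum_carrier[simp]: "msum n f I \<in> carrier_mat n n"
  by (simp add: msum_def)

lemma msum_dims[simp]: "dim_row (msum n f I) = n" "dim_col (msum n f I) = n"
  by (simp_all add: msum_def)

lemma msum_index:
  "i < n \<Longrightarrow> j < n \<Longrightarrow> msum n f I $$ (i, j) = (\<Sum>k\<in>I. f k $$ (i, j))"
  by (simp add: msum_def)

lemma div_lt: "r < m * (n::nat) \<Longrightarrow> r div n < m"
  by (simp add: less_mult_imp_div_less)
lemma mod_lt: "r < m * (n::nat) \<Longrightarrow> r mod n < n"
  by (metis mod_less_divisor mult_0_right neq0_conv not_less0)

lemma kron_mult:
  assumes A: "A \<in> carrier_mat m k" and B: "B \<in> carrier_mat n l"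
    and C: "C \<in> carrier_mat k p" and D: "D \<in> carrier_mat l q"
  shows "kron_mat A B * kron_mat C D = kron_mat (A * C) (B * D)"
proof (rule eq_matI)
  show "dim_row (kron_mat A B * kron_mat C D) = dim_row (kron_mat (A * C) (B * D))"
    "dim_col (kron_mat A B * kron_mat C D) = dim_col (kron_mat (A * C) (B * D))"
    using assms by (auto simp: kron_mat_def)
  fix r c assume "r < dim_row (kron_mat (A * C) (B * D))" "c < dim_col (kron_mat (A * C) (B * D))"
  then have r: "r < m*n" and c: "c < p*q" using assms by (auto simp: kron_mat_def)
  have AC: "A * C \<in> carrier_mat m p" and BD: "B * D \<in> carrier_mat n q" using assms by auto
  have "(kron_mat A B * kron_mat C D) $$ (r, c) =
     (\<Sum>x<k*l. kron_mat A B $$ (r, x) * kron_mat C D $$ (x, c))"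
    by (rule mult_index[OF kron_carrier[OF A B] kron_carrier[OF C D] r c])
  also have "\<dots> = (\<Sum>x<k*l. (A $$ (r div n, x div l) * C $$ (x div l, c div q)) *
       (B $$ (r mod n, x mod l) * D $$ (x mod l, c mod q)))"
    using r c A B C D by (intro sum.cong) (auto simp: kron_index ac_simps)
  also have "\<dots> = (\<Sum>a<k. \<Sum>b<l. (A $$ (r div n, a) * C $$ (a, c div q)) *
       (B $$ (r mod n, b) * D $$ (b, c mod q)))"
    by (rule sum_div_mod)
  also have "\<dots> = (\<Sum>a<k. A $$ (r div n, a) * C $$ (a, c div q)) *
       (\<Sum>b<l. B $$ (r mod n, b) * D $$ (b, c mod q))"
    by (rule sum_product[symmetric])
  also have "\<dots> = (A * C) $$ (r div n, c div q) * (B * D) $$ (r mod n, c mod q)"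
    by (simp only: mult_index[OF A C div_lt[OF r] div_lt[OF c]] mult_index[OF B D mod_lt[OF r] mod_lt[OF c]])
  also have "\<dots> = kron_mat (A * C) (B * D) $$ (r, c)"
    using r c by (simp add: kron_index[OF AC BD])
  finally show "(kron_mat A B * kron_mat C D) $$ (r, c) = kron_mat (A * C) (B * D) $$ (r, c)" .
qed

lemma kron_one: "kron_mat (1\<^sub>m m) (1\<^sub>m n) = 1\<^sub>m (m*n)"
proof (rule eq_matI)
  fix r c assume "r < dim_row (1\<^sub>m (m*n) :: complex mat)" "c < dim_col (1\<^sub>m (m*n) :: complex mat)"
  then have r: "r < m*n" and c: "c < m*n" by auto
  show "kron_mat (1\<^sub>m m) (1\<^sub>m n) $$ (r, c) = 1\<^sub>m (m * n) $$ (r, c)"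
    using r c by (simp add: kron_index[OF one_carrier_mat one_carrier_mat] div_lt mod_lt) (metis div_mult_mod_eq)
qed (auto simp: kron_mat_def)

lemma kron_msum:
  assumes A: "A \<in> carrier_mat m m" and f: "\<forall>i\<in>I. f i \<in> carrier_mat n n"
  shows "kron_mat A (msum n f I) = msum (m*n) (\<lambda>i. kron_mat A (f i)) I"
proof (rule eq_matI)
  fix r c assume "r < dim_row (msum (m*n) (\<lambda>i. kron_mat A (f i)) I)" "c < dim_col (msum (m*n) (\<lambda>i. kron_mat A (f i)) I)"
  then have r: "r < m*n" and c: "c < m*n" by auto
  show "kron_mat A (msum n f I) $$ (r, c) = msum (m*n) (\<lambda>i. kron_mat A (f i)) I $$ (r, c)"
    apply (simp add: kron_index[OF A msum_carrier] msum_index[OF mod_lt[OF r] mod_lt[OF c]] msum_index[OF r c] r c sum_distrib_left)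
    apply (rule sum.cong[OF refl])
    using r c A f by (subst kron_index[where m=m and k=m and n=n and l=n]) auto
qed (use A in \<open>auto simp: kron_mat_def\<close>)

lemma mult_msum:
  assumes A: "A \<in> carrier_mat n n" and f: "\<forall>i\<in>I. f i \<in> carrier_mat n n"
  shows "A * msum n f I = msum n (\<lambda>i. A * f i) I"
proof (rule eq_matI)
  fix r c assume "r < dim_row (msum n (\<lambda>i. A * f i) I)" "c < dim_col (msum n (\<lambda>i. A * f i) I)"
  then have r: "r < n" and c: "c < n" by auto
  have "(A * msum n f I) $$ (r, c) = (\<Sum>x<n. A $$ (r, x) * (\<Sum>i\<in>I. f i $$ (x, c)))"
    by (subst mult_index[OF A msum_carrier]) (use r c in \<open>simp_all add: msum_index\<close>)
  also have "\<dots> = (\<Sum>i\<in>I. \<Sum>x<n. A $$ (r, x) * f i $$ (x, c))"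
    by (simp add: sum_distrib_left sum.swap[of _ I])
  also have "\<dots> = msum n (\<lambda>i. A * f i) I $$ (r, c)"
    apply (simp add: msum_index r c)
    apply (rule sum.cong[OF refl])
    using r c A f by (subst mult_index[where m=n and k=n and p=n]) auto
  finally show "(A * msum n f I) $$ (r, c) = msum n (\<lambda>i. A * f i) I $$ (r, c)" .
qed (use A in auto)

lemma msum_mult:
  assumes A: "A \<in> carrier_mat n n" and f: "\<forall>i\<in>I. f i \<in> carrier_mat n n"
  shows "msum n f I * A = msum n (\<lambda>i. f i * A) I"
proof (rule eq_matI)
  fix r c assume "r < dim_row (msum n (\<lambda>i. f i * A) I)" "c < dim_col (msum n (\<lambda>i. f i * A) I)"
  then have r: "r < n" and c: "c < n" by auto
  have "(msum n f I * A) $$ (r, c) = (\<Sum>x<n. (\<Sum>i\<in>I. f i $$ (r, x)) * A $$ (x, c))"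
    by (subst mult_index[OF msum_carrier A]) (use r c in \<open>simp_all add: msum_index\<close>)
  also have "\<dots> = (\<Sum>i\<in>I. \<Sum>x<n. f i $$ (r, x) * A $$ (x, c))"
    by (simp add: sum_distrib_right sum.swap[of _ I])
  also have "\<dots> = msum n (\<lambda>i. f i * A) I $$ (r, c)"
    apply (simp add: msum_index r c)
    apply (rule sum.cong[OF refl])
    using r c A f by (subst mult_index[where m=n and k=n and p=n]) auto
  finally show "(msum n f I * A) $$ (r, c) = msum n (\<lambda>i. f i * A) I $$ (r, c)" .
qed (use A in auto)

lemma msum_swap:
  "msum n (\<lambda>i. msum n (\<lambda>j. g i j) J) I = msum n (\<lambda>j. msum n (\<lambda>i. g i j) I) J"
  by (rule eq_matI) (auto simp: msum_index sum.swap[of _ I])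

lemma msum_cong:
  "(\<And>i. i \<in> I \<Longrightarrow> f i = g i) \<Longrightarrow> msum n f I = msum n g I"
  unfolding msum_def by (auto intro!: sum.cong )

lemma msum_single:
  assumes "finite I" "k \<in> I" "\<forall>j\<in>I-{k}. f j = 0\<^sub>m n n" "f k \<in> carrier_mat n n"
  shows "msum n f I = f k"
proof (rule eq_matI)
  fix r c assume "r < dim_row (f k)" "c < dim_col (f k)"
  then have r: "r < n" and c: "c < n" using assms by auto
  have "(\<Sum>i\<in>I. f i $$ (r, c)) = f k $$ (r, c) + (\<Sum>i\<in>I-{k}. f i $$ (r, c))"
    using assms by (simp add: sum.remove)
  also have "(\<Sum>i\<in>I-{k}. f i $$ (r, c)) = 0"
    using assms r c by (intro sum.neutral) auto
  finally show "msum n f I $$ (r, c) = f k $$ (r, c)" using r c by (simp add: msum_index)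
qed (use assms in auto)

lemma sum4: fixes F :: "nat\<Rightarrow>nat\<Rightarrow>nat\<Rightarrow>nat\<Rightarrow>'a::comm_monoid_add"
 shows "(\<Sum>i<n. \<Sum>j<n. \<Sum>k<n. \<Sum>l<n. F i j k l) = (\<Sum>k<n. \<Sum>l<n. \<Sum>i<n. \<Sum>j<n. F i j k l)"
proof -
  have "(\<Sum>i<n. \<Sum>j<n. \<Sum>k<n. \<Sum>l<n. F i j k l) = (\<Sum>i<n. \<Sum>k<n. \<Sum>l<n. \<Sum>j<n. F i j k l)"
  proof (rule sum.cong[OF refl])
    fix i
    have "(\<Sum>j<n. \<Sum>k<n. \<Sum>l<n. F i j k l) = (\<Sum>k<n. \<Sum>j<n. \<Sum>l<n. F i j k l)" by (rule sum.swap)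
    also have "\<dots> = (\<Sum>k<n. \<Sum>l<n. \<Sum>j<n. F i j k l)" by (rule sum.cong[OF refl], rule sum.swap)
    finally show "(\<Sum>j<n. \<Sum>k<n. \<Sum>l<n. F i j k l) = (\<Sum>k<n. \<Sum>l<n. \<Sum>j<n. F i j k l)" .
  qed
  also have "\<dots> = (\<Sum>k<n. \<Sum>i<n. \<Sum>l<n. \<Sum>j<n. F i j k l)" by (rule sum.swap)
  also have "\<dots> = (\<Sum>k<n. \<Sum>l<n. \<Sum>i<n. \<Sum>j<n. F i j k l)" by (rule sum.cong[OF refl], rule sum.swap)
  finally show ?thesis .
qed



lemma PTP_index:
  assumes P: "P \<in> carrier_mat N N" and T: "T \<in> carrier_mat N N" and i: "i < N" and j: "j < N"
  shows "(P*T*P) $$ (i,j) = (\<Sum>k<N. \<Sum>l<N. P $$ (i,k) * T $$ (k,l) * P $$ (l,j))"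
proof -
  have PT: "P * T \<in> carrier_mat N N" using P T by auto
  have "(P*T*P) $$ (i,j) = (\<Sum>l<N. (P*T) $$ (i,l) * P $$ (l,j))"
    by (rule mult_index[OF PT P i j])
  also have "\<dots> = (\<Sum>l<N. (\<Sum>k<N. P $$ (i,k) * T $$ (k,l)) * P $$ (l,j))"
    by (intro sum.cong refl) (simp add: mult_index[OF P T i])
  also have "\<dots> = (\<Sum>l<N. \<Sum>k<N. P $$ (i,k) * T $$ (k,l) * P $$ (l,j))"
    by (simp add: sum_distrib_right)
  also have "\<dots> = (\<Sum>k<N. \<Sum>l<N. P $$ (i,k) * T $$ (k,l) * P $$ (l,j))"
    by (rule sum.swap)
  finally show ?thesis .
qed

lemma proj_herm: "proj_mat N P \<Longrightarrow> i < N \<Longrightarrow> j < N \<Longrightarrow> P $$ (i,j) = cnj (P $$ (j,i))"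
  unfolding proj_mat_def hermitian_mat_def by (metis carrier_matD(1))

lemma proj_cnj: "proj_mat N P \<Longrightarrow> i < N \<Longrightarrow> j < N \<Longrightarrow> cnj (P $$ (i,j)) = P $$ (j,i)"
  using proj_herm[of N P j i] by simp

lemma psd_herm: "psd_mat N T \<Longrightarrow> i < N \<Longrightarrow> j < N \<Longrightarrow> T $$ (i,j) = cnj (T $$ (j,i))"
  unfolding psd_mat_def hermitian_mat_def by (metis carrier_matD(1))

lemma psd_cnj: "psd_mat N T \<Longrightarrow> i < N \<Longrightarrow> j < N \<Longrightarrow> cnj (T $$ (i,j)) = T $$ (j,i)"
  using psd_herm[of N T j i] by simp

lemma psd_PTP:
  assumes Pp: "proj_mat N P" and Tp: "psd_mat N T"
  shows "psd_mat N (P*T*P)"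
proof -
  have P: "P \<in> carrier_mat N N" using Pp by (simp add: proj_mat_def)
  have T: "T \<in> carrier_mat N N" using Tp by (simp add: psd_mat_def)
  have C: "P*T*P \<in> carrier_mat N N" using P T by auto
  have H: "hermitian_mat (P*T*P)"
    unfolding hermitian_mat_def
  proof (intro conjI allI impI)
    show "dim_row (P * T * P) = dim_col (P * T * P)" using P by auto
    fix i j assume "i < dim_row (P * T * P)" "j < dim_col (P * T * P)"
    then have i: "i < N" and j: "j < N" using C by auto
    have "cnj ((P*T*P) $$ (j,i)) = (\<Sum>k<N. \<Sum>l<N. P $$ (k,j) * T $$ (l,k) * P $$ (i,l))"
      by (simp add: PTP_index[OF P T j i] proj_cnj[OF Pp] psd_cnj[OF Tp] i j)
    also have "\<dots> = (\<Sum>l<N. \<Sum>k<N. P $$ (k,j) * T $$ (l,k) * P $$ (i,l))"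
      by (rule sum.swap)
    also have "\<dots> = (P*T*P) $$ (i,j)"
      unfolding PTP_index[OF P T i j] by (intro sum.cong refl) (simp add: ac_simps)
    finally show "(P*T*P) $$ (i,j) = cnj ((P*T*P) $$ (j,i))" by simp
  qed
  have Q: "0 \<le> (\<Sum>i<N. \<Sum>j<N. cnj (v i) * (P*T*P) $$ (i, j) * v j)" for v
  proof -
    define w where "w l = (\<Sum>j<N. P $$ (l,j) * v j)" for l
    have cw: "cnj (w k) = (\<Sum>i<N. cnj (v i) * P $$ (i,k))" if k: "k < N" for k
      unfolding w_def by (auto simp: proj_cnj[OF Pp k] mult.commute intro!: sum.cong)
    have "(\<Sum>i<N. \<Sum>j<N. cnj (v i) * (P*T*P) $$ (i, j) * v j) =
        (\<Sum>i<N. \<Sum>j<N. \<Sum>k<N. \<Sum>l<N. cnj (v i) * P $$ (i,k) * T $$ (k,l) * P $$ (l,j) * v j)"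
      by (intro sum.cong refl) (simp add: PTP_index[OF P T] sum_distrib_left sum_distrib_right mult.assoc)
    also have "\<dots> = (\<Sum>k<N. \<Sum>l<N. \<Sum>i<N. \<Sum>j<N. cnj (v i) * P $$ (i,k) * T $$ (k,l) * P $$ (l,j) * v j)"
      by (rule sum4)
    also have "\<dots> = (\<Sum>k<N. \<Sum>l<N. cnj (w k) * T $$ (k,l) * w l)"
    proof (intro sum.cong refl)
      fix k l assume k: "k \<in> {..<N}" and l: "l \<in> {..<N}"
      have "cnj (w k) * T $$ (k,l) * w l =
          (\<Sum>i<N. cnj (v i) * P $$ (i,k) * T $$ (k,l)) * (\<Sum>j<N. P $$ (l,j) * v j)"
        unfolding cw[of k, OF k[simplified]] by (simp add: w_def sum_distrib_right)
      also have "\<dots> = (\<Sum>i<N. \<Sum>j<N. (cnj (v i) * P $$ (i,k) * T $$ (k,l)) * (P $$ (l,j) * v j))"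
        by (rule sum_product)
      also have "\<dots> = (\<Sum>i<N. \<Sum>j<N. cnj (v i) * P $$ (i,k) * T $$ (k,l) * P $$ (l,j) * v j)"
        by (simp add: mult.assoc)
      finally show "(\<Sum>i<N. \<Sum>j<N. cnj (v i) * P $$ (i,k) * T $$ (k,l) * P $$ (l,j) * v j) =
          cnj (w k) * T $$ (k,l) * w l" by simp
    qed
    finally show ?thesis using Tp unfolding psd_mat_def by simp
  qed
  show ?thesis unfolding psd_mat_def using C H Q by blast
qed

lemma psd_msum:
  assumes "finite J" "\<forall>j\<in>J. psd_mat N (f j)"
  shows "psd_mat N (msum N f J)"
proof -
  have H: "hermitian_mat (msum N f J)"
    unfolding hermitian_mat_def using assms
    by (auto simp: msum_index psd_cnj intro!: sum.cong)
  have Q: "0 \<le> (\<Sum>i<N. \<Sum>j<N. cnj (v i) * msum N f J $$ (i, j) * v j)" for v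
  proof -
    have "(\<Sum>i<N. \<Sum>j<N. cnj (v i) * msum N f J $$ (i, j) * v j) =
       (\<Sum>i<N. \<Sum>j<N. \<Sum>t\<in>J. cnj (v i) * f t $$ (i, j) * v j)"
      by (intro sum.cong refl) (simp add: msum_index sum_distrib_left sum_distrib_right)
    also have "\<dots> = (\<Sum>t\<in>J. \<Sum>i<N. \<Sum>j<N. cnj (v i) * f t $$ (i, j) * v j)"
      by (simp add: sum.swap[of _ J])
    also have "0 \<le> \<dots>"
      using assms by (intro sum_nonneg[of J]) (simp add: psd_mat_def)
    finally show ?thesis .
  qed
  show ?thesis unfolding psd_mat_def using H Q by simp
qed



lemma msum_shift: "msum m f {..<n} = msum m (\<lambda>i. f (i - 1)) {1..n}"
  unfolding msum_def
  by (intro cong[OF refl, of _ _ "mat m m"] ext)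
     (auto intro!: sum.reindex_bij_witness[of _ "\<lambda>i. i - 1" Suc])

lemma zero_aux1:
  assumes "A \<in> carrier_mat n n" "B \<in> carrier_mat n n" "C \<in> carrier_mat n n" "D \<in> carrier_mat n n"
    and "C * D = 0\<^sub>m n n"
  shows "A * B * C * D = 0\<^sub>m n n"
proof -
  have AB: "A * B \<in> carrier_mat n n" using assms by auto
  have "A * B * C * D = (A * B) * (C * D)" using AB assms by (meson assoc_mult_mat)
  also have "\<dots> = (A * B) * 0\<^sub>m n n" using assms by simp
  also have "\<dots> = 0\<^sub>m n n" using AB by (rule right_mult_zero_mat)
  finally show ?thesis .
qed

lemma zero_aux2:
  assumes D: "D \<in> carrier_mat n n" and A: "A \<in> carrier_mat n n" and B: "B \<in> carrier_mat n n"
    and C: "C \<in> carrier_mat n n" and DA: "D * A = 0\<^sub>m n n"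
  shows "D * (A * B * C) = 0\<^sub>m n n"
proof -
  have BC: "B * C \<in> carrier_mat n n" using B C by auto
  have "D * (A * B * C) = D * (A * (B * C))" by (simp only: assoc_mult_mat[OF A B C])
  also have "\<dots> = (D * A) * (B * C)" by (rule assoc_mult_mat[symmetric, OF D A BC])
  also have "\<dots> = 0\<^sub>m n n" unfolding DA by (rule left_mult_zero_mat[OF BC])
  finally show ?thesis .
qed

theorem lemma1:
  fixes M N u :: nat and \<Sigma> :: "complex mat" and P :: "nat \<Rightarrow> complex mat"
  assumes "psd_mat (M * N) \<Sigma>"
    and "separable M N \<Sigma>"
    and "\<forall>j \<in> {1..u}. minimal_proj_in N (right_commutant M N \<Sigma>) (P j)"
    and "\<forall>j \<in> {1..u}. \<forall>k \<in> {1..u}. j \<noteq> k \<longrightarrow> P j * P k = 0\<^sub>m N N"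
    and "msum N P {1..u} = 1\<^sub>m N"
  shows "\<exists>s :: nat. \<exists>R T :: nat \<Rightarrow> complex mat.
     (\<forall>i \<in> {1..s}. psd_mat M (R i) \<and> psd_mat N (T i)) \<and>
     \<Sigma> = msum (M * N) (\<lambda>i. kron_mat (R i) (T i)) {1..s} \<and>
     (\<forall>i \<in> {1..s}. \<forall>j \<in> {1..u}. T i * P j = P j * T i)"
proof -
  obtain n R T where RT: "\<forall>i<n. psd_mat M (R i) \<and> psd_mat N (T i)"
    and Sig: "\<Sigma> = msum (M*N) (\<lambda>i. kron_mat (R i) (T i)) {..<n}"
    using assms(2) unfolding separable_def by blast
  have RC: "R i \<in> carrier_mat M M" if "i < n" for i using RT that by (simp add: psd_mat_def)
  have TC: "T i \<in> carrier_mat N N" if "i < n" for i using RT that by (simp add: psd_mat_def)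
  have Pproj: "proj_mat N (P j)" if "j \<in> {1..u}" for j
    using assms(3) that by (simp add: minimal_proj_in_def)
  have Pcomm: "P j \<in> right_commutant M N \<Sigma>" if "j \<in> {1..u}" for j
    using assms(3) that by (simp add: minimal_proj_in_def)
  have PC: "P j \<in> carrier_mat N N" if "j \<in> {1..u}" for j
    using Pproj[OF that] by (simp add: proj_mat_def)
  have PP: "P j * P j = P j" if "j \<in> {1..u}" for j
    using Pproj[OF that] by (simp add: proj_mat_def)
  have PQ: "P j * P k = 0\<^sub>m N N" if "j \<in> {1..u}" "k \<in> {1..u}" "j \<noteq> k" for j k
    using assms(4) that by blast
  have SC: "\<Sigma> \<in> carrier_mat (M*N) (M*N)" using assms(1) by (simp add: psd_mat_def)
  define K where "K j = kron_mat (1\<^sub>m M) (P j)" for j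
  have KC: "K j \<in> carrier_mat (M*N) (M*N)" if "j \<in> {1..u}" for j
    unfolding K_def using kron_carrier[OF one_carrier_mat PC[OF that]] .
  have KS: "K j * \<Sigma> = \<Sigma> * K j" if "j \<in> {1..u}" for j
    using Pcomm[OF that] unfolding K_def right_commutant_def by simp
  have KK: "K j * K j = K j" if "j \<in> {1..u}" for j
    unfolding K_def using kron_mult[OF one_carrier_mat PC[OF that] one_carrier_mat PC[OF that]]
    by (simp add: PP[OF that])
  have sumK: "msum (M*N) K {1..u} = 1\<^sub>m (M*N)"
  proof -
    have "msum (M*N) K {1..u} = kron_mat (1\<^sub>m M) (msum N P {1..u})"
      unfolding K_def using PC by (intro kron_msum[symmetric]) auto
    also have "\<dots> = 1\<^sub>m (M*N)" unfolding assms(5) by (rule kron_one)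
    finally show ?thesis .
  qed
  have step1: "\<Sigma> = msum (M*N) (\<lambda>j. K j * \<Sigma> * K j) {1..u}"
  proof -
    have "\<Sigma> = \<Sigma> * msum (M*N) K {1..u}" unfolding sumK using SC by simp
    also have "\<dots> = msum (M*N) (\<lambda>j. \<Sigma> * K j) {1..u}"
      using SC KC by (intro mult_msum) auto
    also have "\<dots> = msum (M*N) (\<lambda>j. K j * \<Sigma> * K j) {1..u}"
    proof (rule msum_cong)
      fix j assume j: "j \<in> {1..u}"
      have "\<Sigma> * K j = \<Sigma> * (K j * K j)" by (simp add: KK[OF j])
      also have "\<dots> = (\<Sigma> * K j) * K j" using SC KC[OF j] by simp
      also have "\<dots> = K j * \<Sigma> * K j" by (simp add: KS[OF j])
      finally show "\<Sigma> * K j = K j * \<Sigma> * K j" .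
    qed
    finally show ?thesis .
  qed
  have step2: "K j * \<Sigma> * K j = msum (M*N) (\<lambda>i. kron_mat (R i) (P j * T i * P j)) {..<n}"
    if j: "j \<in> {1..u}" for j
  proof -
    have fC: "\<forall>i\<in>{..<n}. kron_mat (R i) (T i) \<in> carrier_mat (M*N) (M*N)"
      using RC TC kron_carrier by blast
    have "K j * \<Sigma> * K j = msum (M*N) (\<lambda>i. K j * kron_mat (R i) (T i)) {..<n} * K j"
      unfolding Sig using KC[OF j] fC by (simp add: mult_msum)
    also have "\<dots> = msum (M*N) (\<lambda>i. K j * kron_mat (R i) (T i) * K j) {..<n}"
      using KC[OF j] fC by (intro msum_mult) auto
    also have "\<dots> = msum (M*N) (\<lambda>i. kron_mat (R i) (P j * T i * P j)) {..<n}"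
    proof (rule msum_cong)
      fix i assume i: "i \<in> {..<n}"
      then have Ri: "R i \<in> carrier_mat M M" and Ti: "T i \<in> carrier_mat N N" using RC TC by auto
      have PTi: "P j * T i \<in> carrier_mat N N" using PC[OF j] Ti by auto
      have "K j * kron_mat (R i) (T i) = kron_mat (1\<^sub>m M * R i) (P j * T i)"
        unfolding K_def by (rule kron_mult[OF one_carrier_mat PC[OF j] Ri Ti])
      also have "\<dots> = kron_mat (R i) (P j * T i)" using Ri by simp
      finally have "K j * kron_mat (R i) (T i) * K j = kron_mat (R i) (P j * T i) * kron_mat (1\<^sub>m M) (P j)"
        unfolding K_def by simp
      also have "\<dots> = kron_mat (R i * 1\<^sub>m M) (P j * T i * P j)"
        by (rule kron_mult[OF Ri PTi one_carrier_mat PC[OF j]])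
      also have "\<dots> = kron_mat (R i) (P j * T i * P j)" using Ri by simp
      finally show "K j * kron_mat (R i) (T i) * K j = kron_mat (R i) (P j * T i * P j)" .
    qed
    finally show ?thesis .
  qed
  define T' where "T' i = msum N (\<lambda>j. P j * T i * P j) {1..u}" for i
  have step3: "\<Sigma> = msum (M*N) (\<lambda>i. kron_mat (R i) (T' i)) {..<n}"
  proof -
    have "\<Sigma> = msum (M*N) (\<lambda>j. msum (M*N) (\<lambda>i. kron_mat (R i) (P j * T i * P j)) {..<n}) {1..u}"
      using step1 step2 by (metis (no_types, lifting) msum_cong)
    also have "\<dots> = msum (M*N) (\<lambda>i. msum (M*N) (\<lambda>j. kron_mat (R i) (P j * T i * P j)) {1..u}) {..<n}"
      by (rule msum_swap)
    also have "\<dots> = msum (M*N) (\<lambda>i. kron_mat (R i) (T' i)) {..<n}"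
    proof (rule msum_cong)
      fix i assume i: "i \<in> {..<n}"
      show "msum (M*N) (\<lambda>j. kron_mat (R i) (P j * T i * P j)) {1..u} = kron_mat (R i) (T' i)"
      unfolding T'_def
    proof (intro kron_msum[symmetric])
      show "R i \<in> carrier_mat M M" using RC i by auto
      show "\<forall>j\<in>{1..u}. P j * T i * P j \<in> carrier_mat N N"
        using TC[of i] PC i by (meson lessThan_iff mult_carrier_mat)
    qed
    qed
    finally show ?thesis .
  qed
  have T'psd: "psd_mat N (T' i)" if "i < n" for i
    unfolding T'_def
  proof (intro psd_msum ballI)
    fix j assume j: "j \<in> {1..u}"
    show "psd_mat N (P j * T i * P j)" using RT that Pproj[OF j] psd_PTP by blast
  qed simp
  have T'C: "T' i \<in> carrier_mat N N" for i unfolding T'_def by simp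
  have comm: "T' i * P k = P k * T' i" if i: "i < n" and k: "k \<in> {1..u}" for i k
  proof -
    have Ti: "T i \<in> carrier_mat N N" using TC i .
    have Pk: "P k \<in> carrier_mat N N" using PC[OF k] .
    have C1: "P j * T i * P j \<in> carrier_mat N N" if j: "j \<in> {1..u}" for j
      using PC[OF j] Ti by (metis mult_carrier_mat)
    have "T' i * P k = msum N (\<lambda>j. P j * T i * P j * P k) {1..u}"
      unfolding T'_def using Pk C1 by (intro msum_mult) auto
    also have "\<dots> = P k * T i * P k * P k"
    proof (rule msum_single)
      show "\<forall>j\<in>{1..u} - {k}. P j * T i * P j * P k = 0\<^sub>m N N"
      proof
        fix j assume j: "j \<in> {1..u} - {k}"
        show "P j * T i * P j * P k = 0\<^sub>m N N"
          by (rule zero_aux1[OF PC Ti PC Pk]) (use j k PQ in auto)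
      qed
      show "P k * T i * P k * P k \<in> carrier_mat N N" using C1[OF k] Pk by (metis mult_carrier_mat)
    qed (use k in auto)
    also have "\<dots> = (P k * T i) * (P k * P k)"
      using Pk Ti by (intro assoc_mult_mat[of _ N N]) auto
    also have "\<dots> = P k * T i * P k" by (simp only: PP[OF k])
    finally have L: "T' i * P k = P k * T i * P k" .
    have "P k * T' i = msum N (\<lambda>j. P k * (P j * T i * P j)) {1..u}"
      unfolding T'_def using Pk C1 by (intro mult_msum) auto
    also have "\<dots> = P k * (P k * T i * P k)"
    proof (rule msum_single)
      show "\<forall>j\<in>{1..u} - {k}. P k * (P j * T i * P j) = 0\<^sub>m N N"
      proof
        fix j assume j: "j \<in> {1..u} - {k}"
        show "P k * (P j * T i * P j) = 0\<^sub>m N N"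
          by (rule zero_aux2[OF Pk PC Ti PC]) (use j k PQ in auto)
      qed
      show "P k * (P k * T i * P k) \<in> carrier_mat N N" using C1[OF k] Pk by (metis mult_carrier_mat)
    qed (use k in auto)
    also have "\<dots> = (P k * (P k * T i)) * P k"
      using Pk Ti by (intro assoc_mult_mat[symmetric, OF Pk _ Pk]) auto
    also have "\<dots> = (P k * P k) * T i * P k"
      by (simp only: assoc_mult_mat[symmetric, OF Pk Pk Ti])
    also have "\<dots> = P k * T i * P k" by (simp only: PP[OF k])
    finally show ?thesis using L by simp
  qed
  show ?thesis
  proof (intro exI conjI)
    show "\<forall>i\<in>{1..n}. psd_mat M (R (i - 1)) \<and> psd_mat N (T' (i - 1))"
    proof
      fix i assume "i \<in> {1..n}"
      then have i: "i - 1 < n" by auto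
      show "psd_mat M (R (i - 1)) \<and> psd_mat N (T' (i - 1))" using RT i T'psd[OF i] by blast
    qed
    show "\<Sigma> = msum (M * N) (\<lambda>i. kron_mat (R (i - 1)) (T' (i - 1))) {1..n}"
      using step3 msum_shift[of "M*N" "\<lambda>i. kron_mat (R i) (T' i)" n] by (simp only:)
    show "\<forall>i\<in>{1..n}. \<forall>j\<in>{1..u}. T' (i - 1) * P j = P j * T' (i - 1)"
    proof (intro ballI)
      fix i j assume "i \<in> {1..n}" "j \<in> {1..u}"
      then have i: "i - 1 < n" and j: "j \<in> {1..u}" by auto
      show "T' (i - 1) * P j = P j * T' (i - 1)" by (rule comm[OF i j])
    qed
  qed
qed

end
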